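(* There is an absolute constant $\epsilon_0>0$ such that every nonadaptive, $1$-sided error unateness tester for functions $f:\{0,1\}^d\to\{0,1\}$ with proximity parameter $\epsilon_0$ must make $\Omega(\sqrt d)$ queries.
   Context: A function $f:\{0,1\}^d\to\mathbb{R}$ is unate if each dimension $i\in[d]$ can be assigned a direction up or down such that: if up, $f(x)\le f(x+e_i)$ for all $x$ with $x_i=0$ (here $x+e_i$ is $x$ with the $i$-th bit set to 1); if down, $f(x)\ge f(x+e_i)$ for all such $x$. The distance between two functions is the fraction of points where they differ; $f$ is $\epsilon$-far from unate if its distance to every unate function is at least $\epsilon$. A unateness tester is a randomized algorithm that, given $\epsilon$ and oracle (query) access to $f$, accepts with probability at least $2/3$ if $f$ is unate and rejects with probability at least $2/3$ if $f$ is $\epsilon$-far from unate. It is nonadaptive if it chooses all its queries before seeing any answers, and has $1$-sided error if it accepts every unate function with probability $1$. *)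

theory Defs
  imports "HOL-Probability.Probability"
begin

text \<open>Points of the hypercube {0,1}^d are encoded as subsets x of {..<d}:
  bit i of x is 1 iff i is in x; x + e_i is insert i x.
  Boolean functions are f :: nat set => bool (False = 0, True = 1);
  only their values on the cube matter.\<close>

definition cube :: "nat \<Rightarrow> nat set set" where
  "cube d = Pow {..<d}"

definition unate :: "nat \<Rightarrow> (nat set \<Rightarrow> 'b::order) \<Rightarrow> bool" where
  "unate d f \<longleftrightarrow> (\<exists>up :: nat \<Rightarrow> bool. \<forall>i<d. \<forall>x\<in>cube d. i \<notin> x \<longrightarrow>
      (if up i then f x \<le> f (insert i x) else f x \<ge> f (insert i x)))"

definition dist_cube :: "nat \<Rightarrow> (nat set \<Rightarrow> 'b) \<Rightarrow> (nat set \<Rightarrow> 'b) \<Rightarrow> real" where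
  "dist_cube d f g = real (card {x\<in>cube d. f x \<noteq> g x}) / 2 ^ d"

definition far_from_unate :: "nat \<Rightarrow> real \<Rightarrow> (nat set \<Rightarrow> bool) \<Rightarrow> bool" where
  "far_from_unate d \<epsilon> f \<longleftrightarrow> (\<forall>g :: nat set \<Rightarrow> bool. unate d g \<longrightarrow> dist_cube d f g \<ge> \<epsilon>)"

text \<open>A nonadaptive randomized tester: a probability distribution over pairs (Q, D)
  of a query set Q and a decision rule D (True = accept) whose output depends only
  on the answers to the queries in Q.\<close>

type_synonym tester = "(nat set set \<times> ((nat set \<Rightarrow> bool) \<Rightarrow> bool)) pmf"

definition accept_prob :: "tester \<Rightarrow> (nat set \<Rightarrow> bool) \<Rightarrow> real" where
  "accept_prob T f = measure_pmf.prob T {(Q, D). D f}"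

definition nonadaptive_query_bounded :: "nat \<Rightarrow> nat \<Rightarrow> tester \<Rightarrow> bool" where
  "nonadaptive_query_bounded d q T \<longleftrightarrow>
     (\<forall>(Q, D)\<in>set_pmf T. Q \<subseteq> cube d \<and> card Q \<le> q \<and>
        (\<forall>f g. (\<forall>x\<in>Q. f x = g x) \<longrightarrow> D f = D g))"

definition one_sided_unateness_tester :: "nat \<Rightarrow> real \<Rightarrow> nat \<Rightarrow> tester \<Rightarrow> bool" where
  "one_sided_unateness_tester d \<epsilon> q T \<longleftrightarrow>
     nonadaptive_query_bounded d q T \<and>
     (\<forall>f. unate d f \<longrightarrow> accept_prob T f = 1) \<and>
     (\<forall>f. far_from_unate d \<epsilon> f \<longrightarrow> 1 - accept_prob T f \<ge> 2/3)"

end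

theory Submission
  imports Defs
begin


lemma second_moment:
  assumes "finite A"
  shows "(\<Sum>x\<in>Pow A. (2 * int (card x) - int (card A))^2) = int (card A) * 2 ^ card A"
  using assms
proof (induction A rule: finite_induct)
  case empty
  then show ?case by simp
next
  case (insert a A)
  let ?s = "\<lambda>x. 2 * int (card x) - int (card A)"
  have fin: "finite (Pow A)" using insert by simp
  have disj: "Pow A \<inter> insert a ` Pow A = {}" using insert by auto
  have inj: "inj_on (insert a) (Pow A)" using insert unfolding inj_on_def
    by (metis Diff_insert_absorb PowD in_mono)
  have cA: "card (insert a A) = card A + 1" using insert by simp
  have "(\<Sum>x\<in>Pow (insert a A). (2 * int (card x) - int (card (insert a A)))^2)
      = (\<Sum>x\<in>Pow A. (2 * int (card x) - int (card (insert a A)))^2)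
       + (\<Sum>x\<in>insert a ` Pow A. (2 * int (card x) - int (card (insert a A)))^2)"
    using fin disj by (simp add: Pow_insert sum.union_disjoint)
  also have "(\<Sum>x\<in>insert a ` Pow A. (2 * int (card x) - int (card (insert a A)))^2)
      = (\<Sum>x\<in>Pow A. (2 * int (card (insert a x)) - int (card (insert a A)))^2)"
    by (simp add: sum.reindex inj)
  also have "\<dots> = (\<Sum>x\<in>Pow A. (?s x + 1)^2)"
  proof (rule sum.cong)
    fix x assume "x \<in> Pow A"
    then have "finite x" "a \<notin> x" using insert finite_subset by auto
    then show "(2 * int (card (insert a x)) - int (card (insert a A)))^2 = (?s x + 1)^2"
      using cA by (simp add: algebra_simps)
  qed simp
  also have "(\<Sum>x\<in>Pow A. (2 * int (card x) - int (card (insert a A)))^2) = (\<Sum>x\<in>Pow A. (?s x - 1)^2)"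
    using cA by (intro sum.cong refl) (simp add: algebra_simps)
  finally have "(\<Sum>x\<in>Pow (insert a A). (2 * int (card x) - int (card (insert a A)))^2)
      = (\<Sum>x\<in>Pow A. (?s x - 1)^2 + (?s x + 1)^2)" by (simp add: sum.distrib)
  also have "\<dots> = (\<Sum>x\<in>Pow A. 2 * (?s x)^2 + 2)"
    by (rule sum.cong) (auto simp: power2_eq_square algebra_simps)
  also have "\<dots> = 2 * (\<Sum>x\<in>Pow A. (?s x)^2) + 2 * 2 ^ card A"
    using insert by (simp add: sum.distrib card_Pow flip: sum_distrib_left)
  also have "\<dots> = 2 * (int (card A) * 2 ^ card A) + 2 * 2 ^ card A"
    by (simp only: insert.IH)
  also have "\<dots> = (int (card A) + 1) * 2 ^ (card A + 1)"
    by (simp add: ring_distribs)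
  also have "\<dots> = int (card (insert a A)) * 2 ^ card (insert a A)"
    using cA by simp
  finally show ?case .
qed

lemma cheb_count:
  assumes "finite A" "card A \<le> d" "d > 0"
  shows "card {x\<in>Pow A. (2 * int (card x) - int (card A))^2 \<ge> 4 * int d} * 4 \<le> 2 ^ card A"
proof -
  let ?s = "\<lambda>x. (2 * int (card x) - int (card A))^2"
  let ?B = "{x\<in>Pow A. ?s x \<ge> 4 * int d}"
  have finP: "finite (Pow A)" using assms by simp
  have sub: "?B \<subseteq> Pow A" by blast
  have nn: "\<forall>x\<in>Pow A - ?B. 0 \<le> ?s x" by simp
  have "int (card ?B) * (4 * int d) = (\<Sum>x\<in>?B. 4 * int d)" by simp
  also have "\<dots> \<le> (\<Sum>x\<in>?B. ?s x)" by (rule sum_mono) blast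
  also have "\<dots> \<le> (\<Sum>x\<in>Pow A. ?s x)"
    by (rule sum_mono2[OF finP sub]) simp
  also have "\<dots> = int (card A) * 2 ^ card A" by (rule second_moment[OF assms(1)])
  also have "\<dots> \<le> int d * 2 ^ card A" using assms(2) by (intro mult_right_mono) auto
  finally have "(int (card ?B) * 4) * int d \<le> 2 ^ card A * int d" by (simp only: mult.commute mult.left_commute mult.assoc)
  then have "int (card ?B) * 4 \<le> 2 ^ card A" using assms(3) by (simp add: mult_le_cancel_right)
  then have "int (card ?B * 4) \<le> int (2 ^ card A)" by simp
  then show ?thesis by (simp only: of_nat_le_iff)
qed

definition sd :: "'a set \<Rightarrow> 'a set \<Rightarrow> 'a set" where "sd u w = (u - w) \<union> (w - u)"

lemma sd_trans: "sd u w \<subseteq> sd u v \<union> sd v w" unfolding sd_def by blast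
lemma sd_sym: "sd u w = sd w u" unfolding sd_def by blast

lemma cover_gen:
  fixes V :: "'a set set" and E :: "('a set \<times> 'a set) set"
  assumes "finite E" "finite V" "E \<subseteq> V \<times> V"
    and "\<And>x y. (x,y) \<in> E \<Longrightarrow> finite (sd x y) \<and> card (sd x y) \<le> W"
  shows "\<exists>(rep::'a set \<Rightarrow> 'a set) S. finite S \<and> card S + W * card (rep ` V) \<le> W * card V \<and>
     (\<forall>u\<in>V. \<forall>w\<in>V. rep u = rep w \<longrightarrow> sd u w \<subseteq> S) \<and> (\<forall>(x,y)\<in>E. rep x = rep y)"
  using assms
proof (induction E rule: finite_induct)
  case empty
  show ?case by (intro exI[where x="\<lambda>x. x"] exI[where x="{}"]) (auto simp: sd_def)
next
  case (insert e E)
  obtain x y where e: "e = (x,y)" by (cases e)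
  have "\<exists>(rep::'a set \<Rightarrow> 'a set) S. finite S \<and> card S + W * card (rep ` V) \<le> W * card V \<and>
     (\<forall>u\<in>V. \<forall>w\<in>V. rep u = rep w \<longrightarrow> sd u w \<subseteq> S) \<and> (\<forall>(x,y)\<in>E. rep x = rep y)"
  proof (rule insert.IH)
    show "finite V" by (rule insert.prems(1))
    show "E \<subseteq> V \<times> V" using insert.prems(2) by blast
    fix a b assume "(a,b) \<in> E"
    then show "finite (sd a b) \<and> card (sd a b) \<le> W" using insert.prems(3)[of a b] by blast
  qed
  then obtain rep :: "'a set \<Rightarrow> 'a set" and S where fS: "finite S" and cS: "card S + W * card (rep ` V) \<le> W * card V"
    and inv: "\<forall>u\<in>V. \<forall>w\<in>V. rep u = rep w \<longrightarrow> sd u w \<subseteq> S" and ed: "\<forall>(a,b)\<in>E. rep a = rep b"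
    by blast
  have xV: "x \<in> V" "y \<in> V" using insert.prems e by auto
  have exy: "finite (sd x y)" "card (sd x y) \<le> W" using insert.prems(3)[of x y] e by auto
  show ?case
  proof (cases "rep x = rep y")
    case True
    have ed2: "\<forall>(a,b)\<in>insert e E. rep a = rep b" using ed e True by auto
    show ?thesis by (rule exI[of _ rep], rule exI[of _ S], intro conjI; fact)
  next
    case False
    define rep' where "rep' = (\<lambda>z. if rep z = rep y then rep x else rep z)"
    define S' where "S' = S \<union> sd x y"
    have img: "rep' ` V = rep ` V - {rep y}"
    proof
      show "rep' ` V \<subseteq> rep ` V - {rep y}"
      proof
        fix a assume "a \<in> rep' ` V"
        then obtain z where z: "z \<in> V" "a = rep' z" by blast
        show "a \<in> rep ` V - {rep y}"
        proof (cases "rep z = rep y")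
          case True
          then have "a = rep x" using z unfolding rep'_def by simp
          then show ?thesis using xV False by blast
        next
          case F2: False
          then have "a = rep z" using z unfolding rep'_def by simp
          then show ?thesis using z F2 by blast
        qed
      qed
      show "rep ` V - {rep y} \<subseteq> rep' ` V"
      proof
        fix a assume a: "a \<in> rep ` V - {rep y}"
        then obtain z where z: "z \<in> V" "a = rep z" by blast
        then have "rep' z = a" using a unfolding rep'_def by simp
        then show "a \<in> rep' ` V" using z by blast
      qed
    qed
    have fin_img: "finite (rep ` V)" using insert.prems by simp
    have ry: "rep y \<in> rep ` V" using xV by simp
    have cimg0: "card (rep' ` V) = card (rep ` V) - 1" using img fin_img ry by (simp add: card_Diff_singleton)
    have pos: "card (rep ` V) > 0" using fin_img ry card_gt_0_iff by blast
    have cimg: "card (rep ` V) = card (rep' ` V) + 1" using cimg0 pos by linarith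
    have cS': "card S' \<le> card S + W"
    proof -
      have "card S' \<le> card S + card (sd x y)" unfolding S'_def by (rule card_Un_le)
      then show ?thesis using exy by linarith
    qed
    have c1: "card S' + W * card (rep' ` V) \<le> W * card V"
    proof -
      have "W * card (rep ` V) = W * card (rep' ` V) + W" unfolding cimg by (simp add: algebra_simps)
      then show ?thesis using cS cS' by linarith
    qed
    have inv': "\<forall>u\<in>V. \<forall>w\<in>V. rep' u = rep' w \<longrightarrow> sd u w \<subseteq> S'"
    proof (intro ballI impI)
      fix u w assume uw: "u \<in> V" "w \<in> V" "rep' u = rep' w"
      have xy: "sd x y \<subseteq> S'" unfolding S'_def by blast
      have SS: "S \<subseteq> S'" unfolding S'_def by blast
      show "sd u w \<subseteq> S'"
      proof (cases "rep u = rep y")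
        case u: True
        show ?thesis
        proof (cases "rep w = rep y")
          case True
          then have "rep u = rep w" using u by simp
          then show ?thesis using inv uw SS by blast
        next
          case w: False
          then have "rep w = rep x" using uw u unfolding rep'_def by auto
          then have a: "sd x w \<subseteq> S" using inv uw xV by auto
          have b: "sd u y \<subseteq> S" using inv uw xV u by auto
          have "sd u w \<subseteq> sd u y \<union> sd y x \<union> sd x w" using sd_trans[of u w y] sd_trans[of y w x] by blast
          then show ?thesis using a b xy SS sd_sym[of y x] by blast
        qed
      next
        case u: False
        show ?thesis
        proof (cases "rep w = rep y")
          case w: True
          then have "rep u = rep x" using uw u unfolding rep'_def by auto
          then have a: "sd u x \<subseteq> S" using inv uw xV by auto
          have b: "sd y w \<subseteq> S" using inv uw xV w by auto
          have "sd u w \<subseteq> sd u x \<union> sd x y \<union> sd y w" using sd_trans[of u w x] sd_trans[of x w y] by blast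
          then show ?thesis using a b xy SS by blast
        next
          case False
          then have "rep u = rep w" using uw u unfolding rep'_def by auto
          then show ?thesis using inv uw SS by blast
        qed
      qed
    qed
    have ed': "\<forall>(a,b)\<in>insert e E. rep' a = rep' b"
    proof -
      { fix a b assume ab: "(a,b) \<in> insert e E"
        have "rep' a = rep' b"
        proof (cases "(a,b) = e")
          case True
          then have "a = x" "b = y" using e by auto
          then show ?thesis using False unfolding rep'_def by simp
        next
          case F2: False
          then have "(a,b) \<in> E" using ab by blast
          then have "rep a = rep b" using ed by blast
          then show ?thesis unfolding rep'_def by simp
        qed }
      then show ?thesis by blast
    qed
    have fS': "finite S'" using fS exy by (simp add: S'_def)
    show ?thesis
      by (rule exI[of _ rep'], rule exI[of _ S'], intro conjI; fact)
  qed
qed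

lemma cover:
  fixes V :: "'a set set"
  assumes "finite V" "\<And>x y. x \<in> V \<Longrightarrow> y \<in> V \<Longrightarrow> x \<subseteq> y \<Longrightarrow> finite y \<and> card (y - x) \<le> W"
  shows "\<exists>S. finite S \<and> card S \<le> W * card V \<and> (\<forall>x\<in>V. \<forall>y\<in>V. x \<subseteq> y \<longrightarrow> y - x \<subseteq> S)"
proof -
  let ?E = "{(x,y)\<in>V\<times>V. x \<subseteq> y}"
  have sE: "?E \<subseteq> V \<times> V" by blast
  have fE: "finite ?E" by (rule finite_subset[OF sE finite_cartesian_product[OF assms(1) assms(1)]])
  have "\<exists>(rep::'a set \<Rightarrow> 'a set) S. finite S \<and> card S + W * card (rep ` V) \<le> W * card V \<and>
     (\<forall>u\<in>V. \<forall>w\<in>V. rep u = rep w \<longrightarrow> sd u w \<subseteq> S) \<and> (\<forall>(x,y)\<in>?E. rep x = rep y)"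
  proof (rule cover_gen[OF fE assms(1)])
    show "?E \<subseteq> V \<times> V" by (rule sE)
    fix x y assume "(x,y) \<in> ?E"
    then have xy: "x \<in> V" "y \<in> V" "x \<subseteq> y" by auto
    have sdx: "sd x y = y - x" using xy(3) unfolding sd_def by blast
    have "finite y \<and> card (y - x) \<le> W" by (rule assms(2)[OF xy])
    then show "finite (sd x y) \<and> card (sd x y) \<le> W" unfolding sdx by simp
  qed
  then show ?thesis
  proof (elim exE conjE)
    fix rep :: "'a set \<Rightarrow> 'a set" and S
    assume r1: "finite S" and r2: "card S + W * card (rep ` V) \<le> W * card V"
     and r3: "\<forall>u\<in>V. \<forall>w\<in>V. rep u = rep w \<longrightarrow> sd u w \<subseteq> S" and r4: "\<forall>(x,y)\<in>?E. rep x = rep y"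
    have r5: "\<forall>x\<in>V. \<forall>y\<in>V. x \<subseteq> y \<longrightarrow> y - x \<subseteq> S"
    proof (intro ballI impI)
      fix x y assume xy: "x \<in> V" "y \<in> V" "x \<subseteq> y"
      then have "(x,y) \<in> ?E" by blast
      then have "rep x = rep y" using r4 by blast
      then have "sd x y \<subseteq> S" using r3 xy by blast
      then show "y - x \<subseteq> S" unfolding sd_def by blast
    qed
    have "card S \<le> W * card V" using r2 by linarith
    then show ?thesis using r1 r5 by blast
  qed
qed



definition RR :: "nat \<Rightarrow> real" where "RR d = 2 * sqrt (real d) + 2"
definition inband :: "nat \<Rightarrow> nat set \<Rightarrow> bool" where
  "inband d z \<longleftrightarrow> \<bar>2 * real (card z) - real d\<bar> \<le> RR d"
definition FF :: "nat \<Rightarrow> nat \<Rightarrow> nat \<Rightarrow> nat set \<Rightarrow> bool" where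
  "FF d i j z = (if 2 * real (card z) > real d + RR d then True
     else if 2 * real (card z) < real d - RR d then False else (i \<in> z \<longleftrightarrow> j \<in> z))"

lemma viol:
  assumes "x \<subseteq> y" "finite y" "FF d i j x" "\<not> FF d i j y"
  shows "inband d x \<and> inband d y \<and> (i \<in> y - x \<or> j \<in> y - x)"
proof -
  have c: "real (card x) \<le> real (card y)" using card_mono[OF assms(2,1)] by simp
  have nx: "\<not> (2 * real (card x) > real d + RR d)"
  proof
    assume "2 * real (card x) > real d + RR d"
    then have "2 * real (card y) > real d + RR d" using c by linarith
    then show False using assms(4) unfolding FF_def by simp
  qed
  have ny: "\<not> (2 * real (card y) < real d - RR d)"
  proof
    assume "2 * real (card y) < real d - RR d"
    then have "2 * real (card x) < real d - RR d" using c by linarith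
    then show False using assms(3) nx unfolding FF_def by simp
  qed
  have nx2: "\<not> (2 * real (card x) < real d - RR d)" using assms(3) nx unfolding FF_def by auto
  have ny2: "\<not> (2 * real (card y) > real d + RR d)" using assms(4) unfolding FF_def by auto
  have "(i \<in> x \<longleftrightarrow> j \<in> x)" using assms(3) nx nx2 unfolding FF_def by simp
  moreover have "\<not> (i \<in> y \<longleftrightarrow> j \<in> y)" using assms(4) ny ny2 unfolding FF_def by simp
  ultimately have "i \<in> y - x \<or> j \<in> y - x" using assms(1) by blast
  moreover have "inband d x" using nx nx2 unfolding inband_def by linarith
  moreover have "inband d y" using ny ny2 unfolding inband_def by linarith
  ultimately show ?thesis by blast
qed

lemma width:
  assumes "inband d x" "inband d y" "x \<subseteq> y" "finite y"
  shows "card (y - x) \<le> nat \<lfloor>RR d\<rfloor>"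
proof -
  have "card (y - x) = card y - card x" using assms(3,4) by (meson card_Diff_subset finite_subset)
  moreover have "card x \<le> card y" using card_mono[OF assms(4,3)] .
  ultimately have e: "real (card (y - x)) = real (card y) - real (card x)" by simp
  have "real (card (y - x)) \<le> RR d" using assms(1,2) unfolding inband_def e by linarith
  then have "int (card (y - x)) \<le> \<lfloor>RR d\<rfloor>" by (simp add: le_floor_iff)
  then show ?thesis by linarith
qed

lemma extend:
  assumes "\<And>x y. x \<in> Q \<Longrightarrow> y \<in> Q \<Longrightarrow> x \<subseteq> y \<Longrightarrow> f x \<Longrightarrow> f y"
  shows "\<exists>g. unate d g \<and> (\<forall>z\<in>Q. g z = f z)"
proof -
  define g where "g = (\<lambda>z. \<exists>x\<in>Q. x \<subseteq> z \<and> f x)"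
  have "unate d g" unfolding unate_def
    by (rule exI[of _ "\<lambda>_. True"]) (auto simp: g_def le_bool_def)
  moreover have "\<forall>z\<in>Q. g z = f z" unfolding g_def using assms by blast
  ultimately show ?thesis by blast
qed



lemma band_ok:
  assumes t: "\<bar>2 * real (card x) - real m\<bar> < 2 * sqrt (real d)" and dm: "m + 2 = d"
    and cz: "card z = card x + k" and k: "k \<le> 2"
  shows "FF d i j z = (i \<in> z \<longleftrightarrow> j \<in> z)"
proof -
  have kr: "real k \<le> 2" using k by simp
  have e: "2 * real (card z) - real d = (2 * real (card x) - real m) + 2 * real k - 2"
    using cz dm by (simp add: algebra_simps flip: dm)
  have "\<not> (2 * real (card z) > real d + RR d)" using t kr e unfolding RR_def by linarith
  moreover have "\<not> (2 * real (card z) < real d - RR d)" using t kr e unfolding RR_def by linarith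
  ultimately show ?thesis unfolding FF_def by simp
qed

lemma far:
  assumes ij: "i < d" "j < d" "i \<noteq> j"
  shows "far_from_unate d (3/16) (FF d i j)"
  unfolding far_from_unate_def
proof (intro allI impI)
  fix g :: "nat set \<Rightarrow> bool" assume ug: "unate d g"
  then obtain up where up: "\<forall>k<d. \<forall>x\<in>cube d. k \<notin> x \<longrightarrow> (if up k then g x \<le> g (insert k x) else g x \<ge> g (insert k x))"
    unfolding unate_def by blast
  define A where "A = {..<d} - {i,j}"
  define m where "m = card A"
  have fA: "finite A" unfolding A_def by simp
  have sub2: "{i,j} \<subseteq> {..<d}" using ij by auto
  have c2: "card {i,j} = 2" using ij by simp
  have m2: "m = card {..<d} - card {i,j}" unfolding m_def A_def
    by (rule card_Diff_subset) (use sub2 in auto)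
  have d2: "d \<ge> 2" using ij by linarith
  have dm: "m + 2 = d" using m2 c2 d2 by simp
  have dpos: "d > 0" using ij by simp
  define G where "G = {x\<in>Pow A. (2 * int (card x) - int m)^2 < 4 * int d}"
  define Bd where "Bd = {x\<in>Pow A. (2 * int (card x) - int m)^2 \<ge> 4 * int d}"
  have cB: "card Bd * 4 \<le> 2^m" unfolding Bd_def m_def
    by (rule cheb_count[OF fA]) (use dm dpos m_def in auto)
  have un: "G \<union> Bd = Pow A" unfolding G_def Bd_def by auto
  have dj: "G \<inter> Bd = {}" unfolding G_def Bd_def by auto
  have part: "card G + card Bd = 2^m"
  proof -
    have "card G + card Bd = card (G \<union> Bd)"
      by (rule card_Un_disjoint[symmetric]) (use fA dj in \<open>auto simp: G_def Bd_def\<close>)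
    also have "\<dots> = 2^m" unfolding un m_def using fA by (simp add: card_Pow)
    finally show ?thesis .
  qed
  have key: "\<exists>z. z \<in> cube d \<and> z - {i,j} = x \<and> FF d i j z \<noteq> g z" if xG: "x \<in> G" for x
  proof -
    have xA: "x \<subseteq> A" using xG unfolding G_def by auto
    then have ix: "i \<notin> x" "j \<notin> x" unfolding A_def by auto
    have xd: "x \<subseteq> {..<d}" using xA unfolding A_def by auto
    have fx: "finite x" using xA fA finite_subset by auto
    have ineq: "(2 * int (card x) - int m)^2 < 4 * int d" using xG unfolding G_def by auto
    have ineqr: "(2 * real (card x) - real m)^2 < (2 * sqrt (real d))^2"
    proof -
      have "real_of_int ((2 * int (card x) - int m)^2) < real_of_int (4 * int d)" using ineq by linarith
      then show ?thesis by (simp add: power_mult_distrib)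
    qed
    have t: "\<bar>2 * real (card x) - real m\<bar> < 2 * sqrt (real d)"
      using power2_less_imp_less[of "\<bar>2 * real (card x) - real m\<bar>" "2 * sqrt (real d)"] ineqr by simp
    define z1 where "z1 = insert i x"
    define z2 where "z2 = insert j x"
    define z3 where "z3 = insert i (insert j x)"
    have f0: "FF d i j x = True" using band_ok[OF t dm, of x 0] ix by simp
    have f1: "FF d i j z1 = False" using band_ok[OF t dm, of z1 1] ix fx ij unfolding z1_def by simp
    have f2: "FF d i j z2 = False" using band_ok[OF t dm, of z2 1] ix fx ij unfolding z2_def by simp
    have f3: "FF d i j z3 = True" using band_ok[OF t dm, of z3 2] ix fx ij unfolding z3_def by simp
    have cubes: "x \<in> cube d" "z1 \<in> cube d" "z2 \<in> cube d" "z3 \<in> cube d"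
      using xd ij unfolding cube_def z1_def z2_def z3_def by auto
    have diffs: "x - {i,j} = x" "z1 - {i,j} = x" "z2 - {i,j} = x" "z3 - {i,j} = x"
      using ix unfolding z1_def z2_def z3_def by auto
    have "\<not> (g x = True \<and> g z1 = False \<and> g z2 = False \<and> g z3 = True)"
    proof
      assume a: "g x = True \<and> g z1 = False \<and> g z2 = False \<and> g z3 = True"
      have i2: "i \<notin> z2" using ix ij unfolding z2_def by auto
      have u1: "if up i then g x \<le> g z1 else g x \<ge> g z1"
        using up ij(1) cubes(1) ix(1) unfolding z1_def by blast
      have u2: "if up i then g z2 \<le> g z3 else g z2 \<ge> g z3"
        using up ij(1) cubes(3) i2 unfolding z3_def z2_def by blast
      show False using u1 u2 a by (cases "up i") auto
    qed
    then have "FF d i j x \<noteq> g x \<or> FF d i j z1 \<noteq> g z1 \<or> FF d i j z2 \<noteq> g z2 \<or> FF d i j z3 \<noteq> g z3"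
      using f0 f1 f2 f3 by auto
    then show ?thesis using cubes diffs by blast
  qed
  define h where "h = (\<lambda>x. SOME z. z \<in> cube d \<and> z - {i,j} = x \<and> FF d i j z \<noteq> g z)"
  have hx: "h x \<in> cube d \<and> h x - {i,j} = x \<and> FF d i j (h x) \<noteq> g (h x)" if "x \<in> G" for x
    unfolding h_def by (rule someI_ex[OF key[OF that]])
  define Dd where "Dd = {z\<in>cube d. FF d i j z \<noteq> g z}"
  have fD: "finite Dd" unfolding Dd_def cube_def by simp
  have inj: "inj_on h G" unfolding inj_on_def using hx by metis
  have himg: "h ` G \<subseteq> Dd" unfolding Dd_def using hx by blast
  have cGD: "card G \<le> card Dd" using card_inj_on_le[OF inj himg fD] .
  have r1: "real (card G) * 4 \<ge> 3 * 2^m"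
  proof -
    have "card G * 4 \<ge> 3 * 2^m" using part cB by simp
    then have "real (3 * 2^m) \<le> real (card G * 4)" by (simp only: of_nat_le_iff)
    then show ?thesis by simp
  qed
  have p: "(2::real)^d = 4 * 2^m" unfolding dm[symmetric] by (simp add: power_add)
  have "3/16 \<le> real (card Dd) / 2^d"
    unfolding p using r1 cGD by (simp add: field_simps)
  then show "3/16 \<le> dist_cube d (FF d i j) g" unfolding dist_cube_def Dd_def by simp
qed


lemma accept_all:
  assumes "accept_prob T g = 1" "\<omega> \<in> set_pmf T"
  shows "snd \<omega> g"
proof -
  have e: "{(Q, D). D g} = {\<omega>. snd \<omega> g}" by auto
  have "measure_pmf.prob T {\<omega>. snd \<omega> g} = 1" using assms(1) unfolding accept_prob_def e .
  then have "AE x in measure_pmf T. x \<in> {\<omega>. snd \<omega> g}"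
    by (subst (asm) measure_pmf.prob_eq_1) auto
  then show ?thesis using assms(2) by (simp add: AE_measure_pmf_iff)
qed

lemma reject_prob: "1 - accept_prob T f = measure_pmf.prob T {\<omega>. \<not> snd \<omega> f}"
proof -
  have e: "{(Q, D). D f} = {\<omega>. snd \<omega> f}" by auto
  have e2: "{\<omega>. \<not> snd \<omega> f} = space (measure_pmf T) - {\<omega>. snd \<omega> f}" by auto
  show ?thesis unfolding accept_prob_def e e2 by (subst measure_pmf.prob_compl) auto
qed

definition PP :: "nat \<Rightarrow> (nat \<times> nat) set" where "PP d = Sigma {..<d} (\<lambda>i. {..<d} - {i})"

lemma card_PP: "card (PP d) = d * (d - 1)"
proof -
  have "card (PP d) = (\<Sum>i\<in>{..<d}. card ({..<d} - {i}))" unfolding PP_def by (rule card_SigmaI) auto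
  also have "\<dots> = (\<Sum>i\<in>{..<d}. d - 1)" by (rule sum.cong) auto
  finally show ?thesis by simp
qed

lemma pointwise:
  assumes nb: "nonadaptive_query_bounded d q T" and acc: "\<forall>g. unate d g \<longrightarrow> accept_prob T g = 1"
    and om: "(Q, D) \<in> set_pmf T"
  shows "card {p\<in>PP d. \<not> D (FF d (fst p) (snd p))} \<le> 2 * d * (nat \<lfloor>RR d\<rfloor> * q)"
proof -
  let ?W = "nat \<lfloor>RR d\<rfloor>"
  have Qc: "Q \<subseteq> cube d" and cQ: "card Q \<le> q" and resp: "\<forall>f g. (\<forall>x\<in>Q. f x = g x) \<longrightarrow> D f = D g"
  proof -
    from nb have "\<forall>x\<in>set_pmf T. case x of (Q, D) \<Rightarrow> Q \<subseteq> cube d \<and> card Q \<le> q \<and>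
        (\<forall>f g. (\<forall>x\<in>Q. f x = g x) \<longrightarrow> D f = D g)" unfolding nonadaptive_query_bounded_def by simp
    from bspec[OF this om] have "Q \<subseteq> cube d \<and> card Q \<le> q \<and> (\<forall>f g. (\<forall>x\<in>Q. f x = g x) \<longrightarrow> D f = D g)" by simp
    then show "Q \<subseteq> cube d" "card Q \<le> q" "\<forall>f g. (\<forall>x\<in>Q. f x = g x) \<longrightarrow> D f = D g" by auto
  qed
  have fQ: "finite Q" using Qc unfolding cube_def by (rule finite_subset) simp
  define V where "V = {z\<in>Q. inband d z}"
  have fV: "finite V" using fQ unfolding V_def by simp
  have cV: "card V \<le> q" using card_mono[OF fQ, of V] cQ unfolding V_def by auto
  have finQ: "finite y" if "y \<in> Q" for y using that Qc unfolding cube_def by (auto intro: finite_subset)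
  obtain S where fS: "finite S" and cS: "card S \<le> ?W * card V"
    and cov: "\<forall>x\<in>V. \<forall>y\<in>V. x \<subseteq> y \<longrightarrow> y - x \<subseteq> S"
  proof -
    have "\<exists>S. finite S \<and> card S \<le> ?W * card V \<and> (\<forall>x\<in>V. \<forall>y\<in>V. x \<subseteq> y \<longrightarrow> y - x \<subseteq> S)"
    proof (rule cover[OF fV])
      fix x y assume "x \<in> V" "y \<in> V" "x \<subseteq> y"
      then show "finite y \<and> card (y - x) \<le> ?W" using width[of d x y] finQ unfolding V_def by auto
    qed
    then show ?thesis using that by blast
  qed
  have sub: "{p\<in>PP d. \<not> D (FF d (fst p) (snd p))} \<subseteq> (S \<times> {..<d}) \<union> ({..<d} \<times> S)"
  proof
    fix p assume p: "p \<in> {p\<in>PP d. \<not> D (FF d (fst p) (snd p))}"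
    obtain i j where pij: "p = (i,j)" by (cases p)
    have ij: "i < d" "j < d" using p pij unfolding PP_def by auto
    have nD: "\<not> D (FF d i j)" using p pij by simp
    show "p \<in> (S \<times> {..<d}) \<union> ({..<d} \<times> S)"
    proof (rule ccontr)
      assume "p \<notin> (S \<times> {..<d}) \<union> ({..<d} \<times> S)"
      then have nS: "i \<notin> S" "j \<notin> S" using ij pij by auto
      have mono: "FF d i j y" if "x \<in> Q" "y \<in> Q" "x \<subseteq> y" "FF d i j x" for x y
      proof (rule ccontr)
        assume "\<not> FF d i j y"
        then have v: "inband d x \<and> inband d y \<and> (i \<in> y - x \<or> j \<in> y - x)"
          using viol[of x y d i j] that finQ by blast
        then have "y - x \<subseteq> S" using cov that unfolding V_def by blast
        then show False using v nS by blast
      qed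
      obtain g where ug: "unate d g" and ag: "\<forall>z\<in>Q. g z = FF d i j z"
        using extend[of Q "FF d i j" d] mono by blast
      have "D g" using accept_all[of T g "(Q, D)"] acc ug om by simp
      moreover have "D g = D (FF d i j)" using resp ag by blast
      ultimately show False using nD by simp
    qed
  qed
  have "card {p\<in>PP d. \<not> D (FF d (fst p) (snd p))} \<le> card ((S \<times> {..<d}) \<union> ({..<d} \<times> S))"
    by (rule card_mono[OF _ sub]) (use fS in auto)
  also have "\<dots> \<le> card (S \<times> {..<d}) + card ({..<d} \<times> S)" by (rule card_Un_le)
  also have "\<dots> = 2 * d * card S" by (simp add: card_cartesian_product)
  also have "\<dots> \<le> 2 * d * (?W * q)" proof -
    have "card S \<le> ?W * q" using cS cV by (meson le_trans mult_le_mono2)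
    then show ?thesis by simp
  qed
  finally show ?thesis .
qed


lemma sum_prob_bound:
  fixes Ev :: "'b \<Rightarrow> 'a set"
  assumes fP: "finite P" and bd: "\<And>\<omega>. \<omega> \<in> set_pmf T \<Longrightarrow> card {p\<in>P. \<omega> \<in> Ev p} \<le> M"
  shows "(\<Sum>p\<in>P. measure_pmf.prob T (Ev p)) \<le> real M"
proof -
  have intg: "integrable (measure_pmf T) (indicat_real (Ev p))" for p
    by (rule integrable_real_indicator) (auto simp: measure_pmf.emeasure_finite less_top[symmetric])
  have "(\<Sum>p\<in>P. measure_pmf.prob T (Ev p)) = (\<Sum>p\<in>P. measure_pmf.expectation T (indicat_real (Ev p)))"
    by (simp add: integral_indicator)
  also have "\<dots> = measure_pmf.expectation T (\<lambda>\<omega>. \<Sum>p\<in>P. indicat_real (Ev p) \<omega>)"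
    by (rule Bochner_Integration.integral_sum[symmetric]) (rule intg)
  also have "\<dots> \<le> real M"
  proof (rule measure_pmf.integral_le_const)
    show "integrable (measure_pmf T) (\<lambda>\<omega>. \<Sum>p\<in>P. indicat_real (Ev p) \<omega>)"
      by (rule Bochner_Integration.integrable_sum) (rule intg)
    show "AE \<omega> in measure_pmf T. (\<Sum>p\<in>P. indicat_real (Ev p) \<omega>) \<le> real M"
    proof (rule AE_pmfI)
      fix \<omega> assume om: "\<omega> \<in> set_pmf T"
      have "(\<Sum>p\<in>P. indicat_real (Ev p) \<omega>) = (\<Sum>p\<in>P. if \<omega> \<in> Ev p then 1 else 0)"
        by (rule sum.cong) (auto simp: indicator_def)
      also have "\<dots> = (\<Sum>p\<in>{p\<in>P. \<omega> \<in> Ev p}. 1)" by (simp only: sum.inter_filter[OF fP])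
      also have "\<dots> = real (card {p\<in>P. \<omega> \<in> Ev p})" by simp
      also have "\<dots> \<le> real M" using bd[OF om] by simp
      finally show "(\<Sum>p\<in>P. indicat_real (Ev p) \<omega>) \<le> real M" .
    qed
  qed
  finally show ?thesis .
qed

lemma final_arith:
  fixes d q W :: real
  assumes d2: "d \<ge> 2" and W: "W \<le> 2 * sqrt d + 2" and W0: "W \<ge> 0" and q0: "q \<ge> 0"
    and main: "d - 1 \<le> 3 * W * q"
  shows "q \<ge> 1/24 * sqrt d"
proof -
  have s1: "sqrt d \<ge> 1" using d2 by simp
  have "W \<le> 4 * sqrt d" using W s1 by linarith
  then have "3 * W * q \<le> 12 * sqrt d * q" using q0 by (simp add: mult_right_mono)
  then have "d - 1 \<le> 12 * sqrt d * q" using main by linarith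
  then have "d \<le> 24 * sqrt d * q" using d2 by linarith
  moreover have "d = sqrt d * sqrt d" using d2 by simp
  ultimately have "sqrt d * sqrt d \<le> sqrt d * (24 * q)" by (simp add: algebra_simps)
  moreover have "sqrt d > 0" using s1 by simp
  ultimately have "sqrt d \<le> 24 * q" by (rule mult_left_le_imp_le)
  then show ?thesis by simp
qed

lemma main_bound:
  assumes d2: "2 \<le> d" and tst: "one_sided_unateness_tester d (3/16) q T"
  shows "1/24 * sqrt (real d) \<le> real q"
proof -
  have nb: "nonadaptive_query_bounded d q T" and acc: "\<forall>g. unate d g \<longrightarrow> accept_prob T g = 1"
    and rej: "\<forall>f. far_from_unate d (3/16) f \<longrightarrow> 1 - accept_prob T f \<ge> 2/3"
    using tst unfolding one_sided_unateness_tester_def by auto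
  let ?W = "nat \<lfloor>RR d\<rfloor>"
  let ?Ev = "\<lambda>p::nat\<times>nat. {\<omega>::(nat set set \<times> ((nat set \<Rightarrow> bool) \<Rightarrow> bool)). \<not> snd \<omega> (FF d (fst p) (snd p))}"
  have fP: "finite (PP d)" unfolding PP_def by auto
  have lower: "2/3 \<le> measure_pmf.prob T (?Ev p)" if "p \<in> PP d" for p
  proof -
    have "fst p < d" "snd p < d" "fst p \<noteq> snd p" using that unfolding PP_def by auto
    then have "far_from_unate d (3/16) (FF d (fst p) (snd p))" by (rule far)
    then have "2/3 \<le> 1 - accept_prob T (FF d (fst p) (snd p))" using rej by blast
    then show ?thesis unfolding reject_prob .
  qed
  have "(\<Sum>p\<in>PP d. measure_pmf.prob T (?Ev p)) \<le> real (2 * d * (?W * q))"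
  proof (rule sum_prob_bound[OF fP])
    fix \<omega> assume om: "\<omega> \<in> set_pmf T"
    obtain Q D where qd: "\<omega> = (Q, D)" by (cases \<omega>)
    have "card {p\<in>PP d. \<not> D (FF d (fst p) (snd p))} \<le> 2 * d * (?W * q)"
      by (rule pointwise[OF nb acc]) (use om qd in simp)
    then show "card {p\<in>PP d. \<omega> \<in> ?Ev p} \<le> 2 * d * (?W * q)" using qd by simp
  qed
  moreover have "(\<Sum>p\<in>PP d. (2/3::real)) \<le> (\<Sum>p\<in>PP d. measure_pmf.prob T (?Ev p))"
    by (rule sum_mono) (rule lower)
  moreover have "(\<Sum>p\<in>PP d. (2/3::real)) = 2/3 * real (d * (d - 1))" by (simp add: card_PP)
  ultimately have "2/3 * real (d * (d - 1)) \<le> real (2 * d * (?W * q))"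
    by linarith
  then have a: "2/3 * (real d * (real d - 1)) \<le> 2 * real d * (real ?W * real q)"
    using d2 by (simp add: of_nat_diff)
  have dpos: "real d > 0" using d2 by simp
  have "real d * (real d - 1) \<le> real d * (3 * real ?W * real q)"
    using a by (simp add: algebra_simps)
  then have main: "real d - 1 \<le> 3 * real ?W * real q" using dpos by (simp add: mult_le_cancel_left)
  have Wle: "real ?W \<le> 2 * sqrt (real d) + 2"
  proof -
    have "RR d \<ge> 0" unfolding RR_def by simp
    then have "real ?W = real_of_int \<lfloor>RR d\<rfloor>" by simp
    also have "\<dots> \<le> RR d" by simp
    finally show ?thesis unfolding RR_def .
  qed
  show "1/24 * sqrt (real d) \<le> real q"
    by (rule final_arith) (use d2 Wle main in auto)
qed


theorem theorem13:
  shows "\<exists>\<epsilon>0 > 0. \<exists>c > 0. \<exists>d0::nat. \<forall>d \<ge> d0. \<forall>q T.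
           one_sided_unateness_tester d \<epsilon>0 q T \<longrightarrow> real q \<ge> c * sqrt (real d)"
proof -
  have "(3/16::real) > 0 \<and> ((1/24::real) > 0 \<and> (\<forall>d \<ge> 2. \<forall>q T.
           one_sided_unateness_tester d (3/16) q T \<longrightarrow> real q \<ge> 1/24 * sqrt (real d)))"
    using main_bound by auto
  then show ?thesis by blast
qed

end
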